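(* Let $\mathcal I$ be the set of all infinitely divisible real random variables $X$ with $E[X^2]<\infty$. For every $\varepsilon\in(0,\frac{\sqrt2}{2})$, $$\inf_{X\in\mathcal I}P\left\{|X-E[X]|\le \varepsilon\sqrt{\mathrm{Var}(X)}\right\}=0.$$
   Context: A real random variable is infinitely divisible if for every $n\ge1$ its distribution equals that of a sum of $n$ i.i.d. random variables. *)

theory Defs
  imports "HOL-Probability.Probability"
begin

text \<open>A real random variable is identified with its law, a probability measure on the
Borel sets of the real line.\<close>

definition inf_divisible :: "real measure \<Rightarrow> bool" where
  "inf_divisible M \<longleftrightarrow> prob_space M \<and> sets M = sets borel \<and>
     (\<forall>n::nat. n \<ge> 1 \<longrightarrow> (\<exists>N::real measure. prob_space N \<and> sets N = sets borel \<and>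
        distr (PiM {..<n} (\<lambda>_. N)) borel (\<lambda>\<omega>. \<Sum>i<n. \<omega> i) = M))"

end

theory Submission
  imports Defs
begin


lemma pmf_nat_sums:
  fixes q :: "nat pmf" and f :: "nat \<Rightarrow> 'b::{banach,second_countable_topology}"
  assumes "summable (\<lambda>k. pmf q k * norm (f k))"
  shows "integrable (measure_pmf q) f" and "(\<lambda>k. pmf q k *\<^sub>R f k) sums integral\<^sup>L (measure_pmf q) f"
proof -
  have i: "integrable (count_space UNIV) (\<lambda>k. pmf q k *\<^sub>R f k)"
    using assms by (simp add: integrable_count_space_nat_iff)
  then show "integrable (measure_pmf q) f"
    unfolding measure_pmf_eq_density by (subst integrable_density) auto
  have "integral\<^sup>L (measure_pmf q) f = integral\<^sup>L (count_space UNIV) (\<lambda>k. pmf q k *\<^sub>R f k)"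
    unfolding measure_pmf_eq_density by (subst integral_density) auto
  then show "(\<lambda>k. pmf q k *\<^sub>R f k) sums integral\<^sup>L (measure_pmf q) f"
    using sums_integral_count_space_nat[OF i] by simp
qed

lemma exp_sums_real: "(\<lambda>k. r ^ k / fact k) sums exp (r::real)"
  using exp_converges[of r] by (simp add: divide_inverse mult.commute)

lemma poisson_mean_sums:
  fixes r :: real
  shows "(\<lambda>k. r ^ k / fact k * exp (-r) * real k) sums r"
proof -
  have "(\<lambda>j. r * (r ^ j / fact j * exp (-r))) sums (r * (exp r * exp (-r)))"
    by (intro sums_mult sums_mult2 exp_sums_real)
  then have "(\<lambda>j. r ^ Suc j / fact (Suc j) * exp (-r) * real (Suc j)) sums r"
    by (simp add: exp_minus field_simps del: of_nat_Suc)
  then show ?thesis by (subst (asm) sums_Suc_iff) simp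
qed

lemma poisson_sq_sums:
  fixes r :: real
  shows "(\<lambda>k. r ^ k / fact k * exp (-r) * (real k)^2) sums (r^2 + r)"
proof -
  have "(\<lambda>j. r * (r ^ j / fact j * exp (-r) * real j + r ^ j / fact j * exp (-r))) sums (r * (r + exp r * exp (-r)))"
    by (intro sums_mult sums_add poisson_mean_sums sums_mult2 exp_sums_real)
  moreover have "(\<lambda>j. r * (r ^ j / fact j * exp (-r) * real j + r ^ j / fact j * exp (-r))) =
     (\<lambda>j. r ^ Suc j / fact (Suc j) * exp (-r) * (real (Suc j))^2)"
  proof (rule ext)
    fix j :: nat
    have f: "fact (Suc j) = (real j + 1) * (fact j :: real)" by (simp add: algebra_simps)
    have "fact j > (0::real)" by simp
    have gen: "\<And>a J p e. (a::real) > 0 \<Longrightarrow> J \<ge> 0 \<Longrightarrow>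
       r * (p / a * e * J + p / a * e) = r * p / ((J + 1) * a) * e * (J+1)^2"
    proof -
      fix a J p e :: real assume a: "a > 0" "J \<ge> 0"
      have "r * p / ((J + 1) * a) * e * (J+1)^2 = r * p * e * (J+1) * ((J+1) / (J+1)) / a"
        by (simp add: power2_eq_square)
      also have "(J+1)/(J+1) = 1" using a by simp
      finally show "r * (p / a * e * J + p / a * e) = r * p / ((J + 1) * a) * e * (J+1)^2"
        by (simp add: algebra_simps add_divide_distrib)
    qed
    show "r * (r ^ j / fact j * exp (-r) * real j + r ^ j / fact j * exp (-r)) =
      r ^ Suc j / fact (Suc j) * exp (-r) * (real (Suc j))^2"
      unfolding f using gen[of "fact j" "real j" "r^j" "exp (-r)"] by simp
  qed
  moreover have "r * (r + exp r * exp (-r)) = r^2 + r"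
    by (simp add: exp_minus field_simps power2_eq_square)
  ultimately have "(\<lambda>j. r ^ Suc j / fact (Suc j) * exp (-r) * (real (Suc j))^2) sums (r^2 + r)"
    by simp
  then show ?thesis by (subst (asm) sums_Suc_iff) simp
qed

definition Poi :: "real \<Rightarrow> real measure" where
  "Poi r = distr (measure_pmf (poisson_pmf r)) borel real"

lemma real_distribution_Poi: "real_distribution (Poi r)"
  unfolding Poi_def real_distribution_def real_distribution_axioms_def
  by (auto intro!: prob_space.prob_space_distr measure_pmf.prob_space_axioms)

lemma integral_Poi:
  fixes g :: "real \<Rightarrow> 'b::{banach,second_countable_topology}"
  assumes "g \<in> borel_measurable borel"
  shows "integral\<^sup>L (Poi r) g = integral\<^sup>L (measure_pmf (poisson_pmf r)) (\<lambda>k. g (real k))"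
    and "integrable (Poi r) g \<longleftrightarrow> integrable (measure_pmf (poisson_pmf r)) (\<lambda>k. g (real k))"
  unfolding Poi_def using assms
  by (auto simp: integral_distr integrable_distr_eq)

lemma poisson_pmf_sums:
  assumes "r > 0"
  shows "(\<lambda>k. pmf (poisson_pmf r) k) sums 1"
proof -
  have "(\<lambda>k. r ^ k / fact k * exp (-r)) sums (exp r * exp (-r))"
    by (intro sums_mult2 exp_sums_real)
  then show ?thesis using assms by (simp add: exp_minus)
qed

lemma char_Poi:
  assumes "r > 0"
  shows "char (Poi r) t = exp (complex_of_real r * (iexp t - 1))"
proof -
  have "char (Poi r) t = integral\<^sup>L (measure_pmf (poisson_pmf r)) (\<lambda>k. iexp (t * real k))"
    unfolding char_def by (subst integral_Poi) auto
  moreover have "(\<lambda>k. pmf (poisson_pmf r) k *\<^sub>R iexp (t * real k)) sums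
      integral\<^sup>L (measure_pmf (poisson_pmf r)) (\<lambda>k. iexp (t * real k))"
    apply (rule pmf_nat_sums)
    using poisson_pmf_sums[OF assms] by (simp add: norm_exp_i_times sums_summable)
  moreover have "(\<lambda>k. pmf (poisson_pmf r) k *\<^sub>R iexp (t * real k)) sums
       (complex_of_real (exp (-r)) * exp (complex_of_real r * iexp t))"
  proof -
    have "(\<lambda>k. complex_of_real (exp (-r)) * ((complex_of_real r * iexp t) ^ k /\<^sub>R fact k)) sums
       (complex_of_real (exp (-r)) * exp (complex_of_real r * iexp t))"
      by (intro sums_mult exp_converges)
    moreover have "\<And>k. complex_of_real (exp (-r)) * ((complex_of_real r * iexp t) ^ k /\<^sub>R fact k) =
       pmf (poisson_pmf r) k *\<^sub>R iexp (t * real k)"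
    proof -
      fix k :: nat
      have "iexp (t * real k) = iexp t ^ k"
        by (subst exp_of_nat_mult[symmetric]) (simp add: algebra_simps)
      then show "complex_of_real (exp (-r)) * ((complex_of_real r * iexp t) ^ k /\<^sub>R fact k) =
         pmf (poisson_pmf r) k *\<^sub>R iexp (t * real k)"
        using assms by (simp add: scaleR_conv_of_real power_mult_distrib field_simps)
    qed
    ultimately show ?thesis by simp
  qed
  ultimately have "char (Poi r) t = complex_of_real (exp (-r)) * exp (complex_of_real r * iexp t)"
    using sums_unique2 by metis
  also have "\<dots> = exp (complex_of_real r * (iexp t - 1))"
    by (simp add: exp_of_real[symmetric] exp_add[symmetric] algebra_simps)
  finally show ?thesis .
qed

lemma sum_PiM_measurable:
  assumes "sets N = sets borel"
  shows "(\<lambda>\<omega>. \<Sum>i<n. \<omega> i :: real) \<in> borel_measurable (PiM {..<n} (\<lambda>_. N))"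
proof -
  have "(\<lambda>\<omega>. \<omega> i) \<in> borel_measurable (PiM {..<n} (\<lambda>_. N))" if "i < n" for i
    using measurable_component_singleton[of i "{..<n}" "\<lambda>_. N"] that assms
    by (simp add: measurable_def)
  then show ?thesis by (intro borel_measurable_sum) auto
qed

lemma real_distribution_sum_PiM:
  assumes "real_distribution N"
  shows "real_distribution (distr (PiM {..<n} (\<lambda>_. N)) borel (\<lambda>\<omega>. \<Sum>i<n. \<omega> i))"
proof -
  interpret N: real_distribution N by fact
  have "prob_space (PiM {..<n} (\<lambda>_. N))"
    by (intro prob_space_PiM) (simp add: N.prob_space_axioms)
  then show ?thesis
    unfolding real_distribution_def real_distribution_axioms_def
    using sum_PiM_measurable[of N n]
    by (auto intro!: prob_space.prob_space_distr)
qed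

lemma char_sum_PiM:
  assumes "real_distribution N"
  shows "char (distr (PiM {..<n} (\<lambda>_. N)) borel (\<lambda>\<omega>. \<Sum>i<n. \<omega> i)) t = char N t ^ n"
proof -
  interpret N: real_distribution N by fact
  interpret P: product_prob_space "\<lambda>_. N"
    by (intro product_prob_spaceI) (simp add: N.prob_space_axioms)
  have "char (distr (PiM {..<n} (\<lambda>_. N)) borel (\<lambda>\<omega>. \<Sum>i<n. \<omega> i)) t =
      integral\<^sup>L (PiM {..<n} (\<lambda>_. N)) (\<lambda>\<omega>. iexp (t * (\<Sum>i<n. \<omega> i)))"
    unfolding char_def using sum_PiM_measurable[of N n]
    by (subst integral_distr) auto
  also have "\<dots> = integral\<^sup>L (PiM {..<n} (\<lambda>_. N)) (\<lambda>\<omega>. \<Prod>i<n. iexp (t * \<omega> i))"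
    by (simp add: sum_distrib_left exp_sum[symmetric])
  also have "\<dots> = (\<Prod>i<n. integral\<^sup>L N (\<lambda>x. iexp (t * x)))"
  proof (rule P.product_integral_prod)
    fix i :: nat
    show "integrable N (\<lambda>x. iexp (t * x))"
      by (intro N.integrable_const_bound[where B=1]) (auto simp: norm_exp_i_times)
  qed simp
  also have "\<dots> = char N t ^ n" by (simp add: char_def)
  finally show ?thesis .
qed

lemma cancel_mult_div: "(a::complex) \<noteq> 0 \<Longrightarrow> a * (c / a * z) = c * z"
  by simp

lemma inf_divisible_Poi:
  assumes "r > 0"
  shows "inf_divisible (Poi r)"
  unfolding inf_divisible_def
proof (intro conjI allI impI)
  interpret real_distribution "Poi r" by (rule real_distribution_Poi)
  show "prob_space (Poi r)" by (rule prob_space_axioms)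
  show "sets (Poi r) = sets borel" by simp
  fix n :: nat assume n: "n \<ge> 1"
  let ?N = "Poi (r / real n)"
  have rn: "r / real n > 0" using n assms by simp
  have "distr (PiM {..<n} (\<lambda>_. ?N)) borel (\<lambda>\<omega>. \<Sum>i<n. \<omega> i) = Poi r"
  proof (rule Levy_uniqueness)
    show "real_distribution (distr (PiM {..<n} (\<lambda>_. ?N)) borel (\<lambda>\<omega>. \<Sum>i<n. \<omega> i))"
      by (intro real_distribution_sum_PiM real_distribution_Poi)
    show "real_distribution (Poi r)" by (rule real_distribution_Poi)
    show "char (distr (PiM {..<n} (\<lambda>_. ?N)) borel (\<lambda>\<omega>. \<Sum>i<n. \<omega> i)) = char (Poi r)"
    proof
      fix t
      have "char (distr (PiM {..<n} (\<lambda>_. ?N)) borel (\<lambda>\<omega>. \<Sum>i<n. \<omega> i)) t = char ?N t ^ n"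
        by (intro char_sum_PiM real_distribution_Poi)
      also have "\<dots> = exp (of_nat n * (complex_of_real (r / real n) * (iexp t - 1)))"
        by (simp only: char_Poi[OF rn] exp_of_nat_mult)
      also have "\<dots> = exp (complex_of_real r * (iexp t - 1))"
      proof -
        have nz: "(of_nat n :: complex) \<noteq> 0" using n by simp
        have "complex_of_real (r / real n) = complex_of_real r / of_nat n" by simp
        then have "of_nat n * (complex_of_real (r / real n) * (iexp t - 1)) = complex_of_real r * (iexp t - 1)"
          using cancel_mult_div[OF nz] by simp
        then show ?thesis by (simp only:)
      qed
      also have "\<dots> = char (Poi r) t" using assms by (simp add: char_Poi)
      finally show "char (distr (PiM {..<n} (\<lambda>_. ?N)) borel (\<lambda>\<omega>. \<Sum>i<n. \<omega> i)) t = char (Poi r) t" .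
    qed
  qed
  moreover have "prob_space ?N" "sets ?N = sets borel"
    using real_distribution_Poi[of "r / real n"] by (auto simp: real_distribution_def real_distribution_axioms_def)
  ultimately show "\<exists>N::real measure. prob_space N \<and> sets N = sets borel \<and>
        distr (PiM {..<n} (\<lambda>_. N)) borel (\<lambda>\<omega>. \<Sum>i<n. \<omega> i) = Poi r"
    by (intro exI[of _ ?N] conjI)
qed

lemma Poi_moments:
  assumes "r > 0"
  shows "integrable (Poi r) (\<lambda>x. x)" "integral\<^sup>L (Poi r) (\<lambda>x. x) = r"
    and "integrable (Poi r) (\<lambda>x. x\<^sup>2)" "integral\<^sup>L (Poi r) (\<lambda>x. x\<^sup>2) = r^2 + r"
proof -
  have s1: "(\<lambda>k. pmf (poisson_pmf r) k *\<^sub>R real k) sums r"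
    using poisson_mean_sums[of r] assms by simp
  have s2: "(\<lambda>k. pmf (poisson_pmf r) k *\<^sub>R (real k)^2) sums (r^2 + r)"
    using poisson_sq_sums[of r] assms by simp
  have m1: "summable (\<lambda>k. pmf (poisson_pmf r) k * norm (real k))"
    using s1 by (simp add: sums_summable)
  have m2: "summable (\<lambda>k. pmf (poisson_pmf r) k * norm ((real k)^2))"
    using s2 by (simp add: sums_summable)
  show "integrable (Poi r) (\<lambda>x. x)"
    using pmf_nat_sums(1)[OF m1] by (subst integral_Poi) auto
  show "integral\<^sup>L (Poi r) (\<lambda>x. x) = r"
    using pmf_nat_sums(2)[OF m1] s1 sums_unique2 by (subst integral_Poi) auto
  show "integrable (Poi r) (\<lambda>x. x\<^sup>2)"
    using pmf_nat_sums(1)[OF m2] by (subst integral_Poi) auto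
  show "integral\<^sup>L (Poi r) (\<lambda>x. x\<^sup>2) = r^2 + r"
    using pmf_nat_sums(2)[OF m2] s2 sums_unique2 by (subst integral_Poi) auto
qed



lemma t_sq: "sqrt (1/2) = sqrt 2 / 2"
    by (rule real_sqrt_unique) (auto simp: power_divide)
lemma t_lt: assumes "0 < \<epsilon>" and "\<epsilon> < sqrt 2 / 2" shows  "\<epsilon> * sqrt (1/2) < 1/2"
  proof -
    have "\<epsilon> * sqrt (1/2) < (sqrt 2 / 2) * (sqrt 2 / 2)"
      unfolding t_sq using assms by (intro mult_strict_right_mono) auto
    also have "\<dots> = 1/2" by (simp add: power2_eq_square[symmetric] power_divide)
    finally show ?thesis .
  qed
lemma t_nk: assumes lt: "c < 1/2" shows "\<not> \<bar>real k - 1/2\<bar> \<le> c"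
  proof -
    have "\<bar>real k - 1/2\<bar> \<ge> 1/2" by (cases k) auto
    then show ?thesis using lt by linarith
  qed
lemma t_empty: assumes lt: "c < 1/2" shows "real -` {x. \<bar>x - 1/2\<bar> \<le> c} \<inter> space (measure_pmf (poisson_pmf (1/2))) = {}"
    using t_nk[OF lt] by blast
lemma t_meas: assumes lt: "c < 1/2" shows "measure (Poi (1/2)) {x. \<bar>x - 1/2\<bar> \<le> c} = 0"
proof -
  have Sb: "{x::real. \<bar>x - 1/2\<bar> \<le> c} \<in> sets borel"
    by measurable
  show ?thesis
    unfolding Poi_def using Sb by (subst measure_distr) (simp_all only: t_empty[OF lt] measure_empty, simp_all)
qed

lemma half_pos: "(0::real) < 1/2" by simp

lemma t_E: "prob_space.expectation (Poi (1/2)) (\<lambda>x. x) = 1/2"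
  by (rule Poi_moments(2)[OF half_pos])

lemma t_V: "prob_space.variance (Poi (1/2)) (\<lambda>x. x) = 1/2"
proof -
  interpret real_distribution "Poi (1/2)" by (rule real_distribution_Poi)
  note m = Poi_moments[OF half_pos]
  have "variance (\<lambda>x. x) = expectation (\<lambda>x. x\<^sup>2) - (expectation (\<lambda>x. x))\<^sup>2"
    by (rule variance_eq[OF m(1) m(3)])
  also have "\<dots> = ((1/2)\<^sup>2 + 1/2) - (1/2)\<^sup>2"
    by (simp only: m(2) m(4))
  also have "\<dots> = 1/2" by simp
  finally show ?thesis .
qed

theorem proposition2p2:
  fixes \<epsilon> :: real
  assumes "0 < \<epsilon>" and "\<epsilon> < sqrt 2 / 2"
  shows "(INF M \<in> {M. inf_divisible M \<and> integrable M (\<lambda>x. x\<^sup>2)}.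
            measure M {x. \<bar>x - prob_space.expectation M (\<lambda>x. x)\<bar>
                          \<le> \<epsilon> * sqrt (prob_space.variance M (\<lambda>x. x))}) = 0"
proof (rule cInf_eq_minimum)
  let ?M = "Poi (1/2)"
  let ?f = "\<lambda>M. measure M {x. \<bar>x - prob_space.expectation M (\<lambda>x. x)\<bar>
                          \<le> \<epsilon> * sqrt (prob_space.variance M (\<lambda>x. x))}"
  let ?A = "{M. inf_divisible M \<and> integrable M (\<lambda>x. x\<^sup>2)}"
  have "measure ?M {x. \<bar>x - 1/2\<bar> \<le> \<epsilon> * sqrt (1/2)} = 0"
    by (rule t_meas[OF t_lt[OF assms]])
  moreover have "?f ?M = measure ?M {x. \<bar>x - 1/2\<bar> \<le> \<epsilon> * sqrt (1/2)}"
    by (subst t_V, subst t_E, rule refl)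
  ultimately have f0: "?f ?M = 0" by simp
  have mem: "?M \<in> ?A"
    using inf_divisible_Poi[of "1/2"] Poi_moments(3)[of "1/2"] by simp
  show "0 \<in> ?f ` ?A"
    by (rule rev_image_eqI[where f="?f", OF mem f0[symmetric]])
next
  fix x assume "x \<in> (\<lambda>M. measure M {x. \<bar>x - prob_space.expectation M (\<lambda>x. x)\<bar>
                          \<le> \<epsilon> * sqrt (prob_space.variance M (\<lambda>x. x))}) ` {M. inf_divisible M \<and> integrable M (\<lambda>x. x\<^sup>2)}"
  then obtain M where "x = measure M {x. \<bar>x - prob_space.expectation M (\<lambda>x. x)\<bar>
                          \<le> \<epsilon> * sqrt (prob_space.variance M (\<lambda>x. x))}" by blast
  then show "0 \<le> x" by simp
qed

end
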